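(* For $n=0,1,2,\ldots$ let $R_n=\sum_{k=0}^n\binom{n}{k}\binom{n+k}{k}\frac{1}{2k-1}$, let $r_n=R_{n+1}/R_n$, and for $n\geq 1$ let $$b_n=3+2\sqrt{2}-\frac{3(41\sqrt{2}+58)}{(14\sqrt{2}+20)n}=\left(3-\frac{9}{2n}\right)+\sqrt{2}\left(2-\frac{3}{n}\right).$$ Then for all $n\geq 3$, $b_n<r_n<b_{n+1}$. *)

theory Defs
  imports Complex_Main
begin

definition R :: "nat \<Rightarrow> real" where
  "R n = (\<Sum>k=0..n. real (n choose k) * real ((n + k) choose k) * (1 / (2 * real k - 1)))"

definition r :: "nat \<Rightarrow> real" where
  "r n = R (n + 1) / R n"

definition b :: "nat \<Rightarrow> real" where
  "b n = 3 + 2 * sqrt 2 - 3 * (41 * sqrt 2 + 58) / ((14 * sqrt 2 + 20) * real n)"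

end

theory Submission
  imports Defs
begin


lemma c1: "(m + 1 - k) * ((m+1) choose k) = (m+1) * (m choose k)"
  by (simp add: binomial_absorb_comp)
lemma c2: "((m + k + 1) choose k) * (m+1) = (m+k+1) * ((m+k) choose k)"
proof -
  have "(m + k + 1 - k) * ((m + k + 1) choose k) = (m + k + 1) * ((m + k + 1 - 1) choose k)"
    by (rule binomial_absorb_comp)
  moreover have "m + k + 1 - k = m + 1" "m + k + 1 - 1 = m + k" by simp_all
  ultimately show ?thesis by (simp add: mult.commute)
qed
lemma c3: "Suc j * (N choose Suc j) = N * ((N - 1) choose j)"
  by (rule binomial_absorption)

definition X :: "nat \<Rightarrow> nat \<Rightarrow> real" where
  "X m k = real (m choose k) * real ((m+k) choose k)"
definition Y :: "nat \<Rightarrow> nat \<Rightarrow> real" where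
  "Y n k = real ((n+2) choose k) * real ((n+k+1) choose k)"

lemma Xs: "X (m+1) k * (real m + 1 - real k) = (real m + 1 + real k) * X m k"
proof (cases "k \<le> m + 1")
  case True
  have a: "real (m + 1 - k) * real ((m+1) choose k) = real (m+1) * real (m choose k)"
    using c1[of m k] by (metis of_nat_mult)
  have b: "real ((m + k + 1) choose k) * real (m+1) = real (m+k+1) * real ((m+k) choose k)"
    using c2[of m k] by (metis of_nat_mult)
  have e: "real (m + 1 - k) = real m + 1 - real k" using True by (simp add: of_nat_diff)
  have "X (m+1) k * (real m + 1 - real k) * real (m+1)
      = (real (m + 1 - k) * real ((m+1) choose k)) * (real ((m + k + 1) choose k) * real (m+1))"
    unfolding X_def e by (simp add: algebra_simps)
  also have "\<dots> = (real m + 1 + real k) * X m k * real (m+1)"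
    unfolding a b X_def by simp
  finally show ?thesis by simp
next
  case False
  then show ?thesis by (simp add: X_def binomial_eq_0)
qed

lemma Ya: "X (n+3) k * (real n + 3 - real k) * (real n + 2)
   = (real n + real k + 3) * (real n + real k + 2) * Y n k"
proof (cases "k \<le> n + 3")
  case True
  have a: "real (n + 3 - k) * real ((n+3) choose k) = real (n+3) * real ((n+2) choose k)"
    using c1[of "n+2" k] by (metis of_nat_mult add.assoc numeral_3_eq_3 numeral_2_eq_2 Suc_eq_plus1 one_add_one)
  have b: "real ((n + k + 3) choose k) * real (n+3) = real (n+k+3) * real ((n+k+2) choose k)"
    using c2[of "n+2" k] by (metis of_nat_mult add.assoc add.commute numeral_3_eq_3 numeral_2_eq_2 Suc_eq_plus1 one_add_one)
  have c: "real ((n + k + 2) choose k) * real (n+2) = real (n+k+2) * real ((n+k+1) choose k)"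
    using c2[of "n+1" k] by (metis of_nat_mult add.assoc add.commute numeral_2_eq_2 Suc_eq_plus1 one_add_one)
  have e: "real (n + 3 - k) = real n + 3 - real k" using True by (simp add: of_nat_diff)
  have "X (n+3) k * (real n + 3 - real k) * (real n + 2) * real (n+3)
     = (real (n + 3 - k) * real ((n+3) choose k)) * (real ((n + k + 3) choose k) * real (n+3)) * (real n + 2)"
    unfolding X_def e by (simp add: algebra_simps)
  also have "\<dots> = real (n+3) * real ((n+2) choose k) * real (n+k+3) * (real ((n+k+2) choose k) * real (n+2))"
    unfolding a b by (simp add: algebra_simps)
  also have "\<dots> = (real n + real k + 3) * (real n + real k + 2) * Y n k * real (n+3)"
    unfolding c Y_def by (simp add: algebra_simps)
  finally show ?thesis by simp
next
  case False
  then have h1: "(n+3) choose k = 0" and h2: "(n+2) choose k = 0"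
    by (simp_all add: binomial_eq_0)
  show ?thesis unfolding X_def Y_def h1 h2 by (simp only: of_nat_0 mult_zero_left mult_zero_right)
qed

lemma Yb: "X (n+3) (Suc j) * (real j + 1)^2 * (real n + 2)
   = (real n + real j + 2) * (real n + real j + 3) * (real n + real j + 4) * Y n j"
proof -
  have a0: "Suc j * ((n+3) choose Suc j) = (n+3) * ((n+2) choose j)"
    using binomial_absorption[of j "n+3"] by simp
  have b0: "Suc j * ((n+j+4) choose Suc j) = (n+j+4) * ((n+j+3) choose j)"
    using binomial_absorption[of j "n+j+4"] by (simp add: algebra_simps)
  note c0 = c2[of "n+2" j]
  note d0 = c2[of "n+1" j]
  have e1: "n+2+j+1 = n+j+3" "n+2+1 = n+3" "n+2+j = n+j+2" "n+1+j+1 = n+j+2" "n+1+j = n+j+1" "n+1+1 = n+2" by simp_all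
  have a: "(real j + 1) * real ((n+3) choose Suc j) = (real n + 3) * real ((n+2) choose j)"
    using arg_cong[OF a0, of real] by (simp add: algebra_simps)
  have b: "(real j + 1) * real ((n+j+4) choose Suc j) = (real n + real j + 4) * real ((n+j+3) choose j)"
    using arg_cong[OF b0, of real] by (simp add: algebra_simps)
  have c: "real ((n + j + 3) choose j) * (real n + 3) = (real n + real j + 3) * real ((n+j+2) choose j)"
    using arg_cong[OF c0, of real] unfolding e1 by (simp add: algebra_simps eval_nat_numeral)
  have d: "real ((n + j + 2) choose j) * (real n + 2) = (real n + real j + 2) * real ((n+j+1) choose j)"
    using arg_cong[OF d0, of real] unfolding e1 by (simp add: algebra_simps eval_nat_numeral)
  have e: "n + 3 + Suc j = n + j + 4" by simp
  have "X (n+3) (Suc j) * (real j + 1)^2 * (real n + 2) * (real n + 3)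
     = ((real j + 1) * real ((n+3) choose Suc j)) * ((real j + 1) * real ((n+j+4) choose Suc j)) * (real n + 2) * (real n + 3)"
    unfolding X_def e by (simp add: power2_eq_square algebra_simps)
  also have "\<dots> = (real n + 3) * real ((n+2) choose j) * (real n + real j + 4) * (real ((n+j+3) choose j) * (real n + 3)) * (real n + 2)"
    unfolding a b by (simp add: algebra_simps)
  also have "\<dots> = (real n + 3) * real ((n+2) choose j) * (real n + real j + 4) * (real n + real j + 3) * (real ((n+j+2) choose j) * (real n + 2))"
    unfolding c by (simp add: algebra_simps)
  also have "\<dots> = (real n + real j + 2) * (real n + real j + 3) * (real n + real j + 4) * Y n j * (real n + 3)"
    unfolding d Y_def by (simp add: algebra_simps)
  finally show ?thesis by simp
qed
lemma solve_eq: "(c::real) \<noteq> 0 \<Longrightarrow> a * p = c * q \<Longrightarrow> q = a * p / c"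
  by (simp add: field_simps)

lemma X0: "X m 0 = 1" by (simp add: X_def)
lemma Y0: "Y n 0 = 1" by (simp add: Y_def)

lemma term_id: "(real n + 3) * X (n+3) k / (2 * real k - 1) - (7 * real n + 13) * X (n+2) k / (2 * real k - 1)
   + (7 * real n + 15) * X (n+1) k / (2 * real k - 1) - (real n + 1) * X n k / (2 * real k - 1)
   = -4 * Y n k + (if k = 0 then 0 else 4 * Y n (k - 1))"
proof (cases k)
  case 0
  then show ?thesis by (simp add: X0 Y0)
next
  case (Suc j)
  define U where "U = X (n+3) k"
  define x where "x = real n"
  define K where "K = real k"
  have K: "K = real j + 1" using Suc K_def by simp
  have x0: "x \<ge> 0" unfolding x_def by simp
  have K1: "K \<ge> 1" using K by simp
  have e2: "X (n+3) k * (x + 3 - K) = (x + 3 + K) * X (n+2) k"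
    using Xs[of "n+2" k] unfolding x_def K_def by (simp add: algebra_simps eval_nat_numeral)
  have e1: "X (n+2) k * (x + 2 - K) = (x + 2 + K) * X (n+1) k"
    using Xs[of "n+1" k] unfolding x_def K_def by (simp add: algebra_simps eval_nat_numeral)
  have e0: "X (n+1) k * (x + 1 - K) = (x + 1 + K) * X n k"
    using Xs[of "n" k] unfolding x_def K_def by (simp add: algebra_simps eval_nat_numeral)
  have ya: "U * (x + 3 - K) * (x + 2) = (x + K + 3) * (x + K + 2) * Y n k"
    using Ya[of n k] unfolding x_def K_def U_def by simp
  have yb: "U * K^2 * (x + 2) = (x + K + 1) * (x + K + 2) * (x + K + 3) * Y n j"
    using Yb[of n j] unfolding x_def K U_def Suc by (simp add: algebra_simps)
  have d: "2 * K - 1 \<noteq> 0" using K1 by simp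
  have nz: "(x + 3 + K) * (x + 2 + K) * (x + 1 + K) \<noteq> 0" using x0 K1 by simp
  have T: "((x + 3) * U - (7 * x + 13) * X (n+2) k + (7 * x + 15) * X (n+1) k - (x + 1) * X n k
        - (2 * K - 1) * (-4 * Y n k + 4 * Y n j)) * ((x + 3 + K) * (x + 2 + K) * (x + 1 + K)) = 0"
    using e0 e1 e2 ya yb unfolding U_def by algebra
  have T0: "(x + 3) * U - (7 * x + 13) * X (n+2) k + (7 * x + 15) * X (n+1) k - (x + 1) * X n k
        = (2 * K - 1) * (-4 * Y n k + 4 * Y n j)"
    using T nz by simp
  have "(x + 3) * U / (2 * K - 1) - (7 * x + 13) * X (n+2) k / (2 * K - 1)
   + (7 * x + 15) * X (n+1) k / (2 * K - 1) - (x + 1) * X n k / (2 * K - 1)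
   = -4 * Y n k + 4 * Y n j"
  proof -
    have "(x + 3) * U / (2 * K - 1) - (7 * x + 13) * X (n+2) k / (2 * K - 1)
      + (7 * x + 15) * X (n+1) k / (2 * K - 1) - (x + 1) * X n k / (2 * K - 1)
      = ((x + 3) * U - (7 * x + 13) * X (n+2) k + (7 * x + 15) * X (n+1) k - (x + 1) * X n k) / (2 * K - 1)"
      by (simp add: diff_divide_distrib add_divide_distrib)
    also have "\<dots> = -4 * Y n k + 4 * Y n j" unfolding T0 using d by simp
    finally show ?thesis .
  qed
  then show ?thesis unfolding U_def x_def K_def using Suc by simp
qed
lemma R_ext: assumes "m \<le> N" shows "R m = (\<Sum>k<Suc N. X m k / (2 * real k - 1))"
proof -
  have "R m = (\<Sum>k\<in>{0..m}. X m k / (2 * real k - 1))"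
    unfolding R_def X_def by simp
  also have "\<dots> = (\<Sum>k<Suc N. X m k / (2 * real k - 1))"
    by (rule sum.mono_neutral_left) (use assms in \<open>auto simp: X_def binomial_eq_0\<close>)
  finally show ?thesis .
qed

lemma R_rec: "(real n + 3) * R (n+3) - (7 * real n + 13) * R (n+2) + (7 * real n + 15) * R (n+1)
   - (real n + 1) * R n = 0"
proof -
  define G where "G k = (if k = 0 then 0 else -4 * Y n (k - 1))" for k
  have "(real n + 3) * R (n+3) - (7 * real n + 13) * R (n+2) + (7 * real n + 15) * R (n+1)
   - (real n + 1) * R n = (\<Sum>k<Suc (n+3). (real n + 3) * X (n+3) k / (2 * real k - 1) - (7 * real n + 13) * X (n+2) k / (2 * real k - 1)
   + (7 * real n + 15) * X (n+1) k / (2 * real k - 1) - (real n + 1) * X n k / (2 * real k - 1))"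
    by (simp add: R_ext[of _ "n+3"] sum_distrib_left sum_subtractf sum.distrib)
  also have "\<dots> = (\<Sum>k<Suc (n+3). G (Suc k) - G k)"
    unfolding term_id G_def by (intro sum.cong) auto
  also have "\<dots> = G (Suc (n+3)) - G 0" by (rule sum_lessThan_telescope)
  also have "\<dots> = 0" unfolding G_def Y_def by (simp add: binomial_eq_0)
  finally show ?thesis .
qed


definition bb :: "real \<Rightarrow> real \<Rightarrow> real" where
  "bb s x = (3 + 2*s) - (9/2 + 3*s) / x"

lemma keyL:
  fixes s x :: real
  assumes s2: "s * s = 2" and s0: "s > 0" and x4: "x \<ge> 4"
  shows "(x+3) * bb s (x+2) \<le> (7*x+13) - (7*x+15) / bb s (x+1) + (x+1) / (bb s (x+1) * bb s (x+1))"
proof -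
  define Xv where "Xv = (3 + 2*s) * (x+1) - (9/2 + 3*s)"
  define Yv where "Yv = (3 + 2*s) * (x+2) - (9/2 + 3*s)"
  define m where "m = x - 4"
  have ss: "s * (s * y) = 2 * y" for y using s2 by (metis mult.assoc mult.commute)
  have m0: "m \<ge> 0" using x4 m_def by simp
  have "(3 + 2*s) * (x+1) \<ge> (3 + 2*s) * 5" using x4 s0 by (intro mult_left_mono) auto
  then have Xp: "Xv > 0" unfolding Xv_def using s0 by (simp add: algebra_simps)
  have e1: "bb s (x+1) = Xv / (x+1)" unfolding bb_def Xv_def using x4 by (simp add: field_simps)
  have e2: "bb s (x+2) = Yv / (x+2)" unfolding bb_def Yv_def using x4 by (simp add: field_simps)
  define D where "D = (x+2) * Xv^2"
  have Dp: "D > 0" unfolding D_def using Xp x4 by simp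
  have L: "(x+3) * bb s (x+2) * D = (x+3) * Yv * Xv^2" unfolding e2 D_def using x4 by simp
  have R: "((7*x+13) - (7*x+15) / bb s (x+1) + (x+1) / (bb s (x+1) * bb s (x+1))) * D
     = (7*x+13)*(x+2)*Xv^2 - (7*x+15)*(x+1)*(x+2)*Xv + (x+1)^3*(x+2)"
    unfolding e1 D_def using x4 Xp by (simp add: field_simps power2_eq_square power3_eq_cube)
  have G: "(7*x+13)*(x+2)*Xv^2 - (7*x+15)*(x+1)*(x+2)*Xv + (x+1)^3*(x+2) - (x+3) * Yv * Xv^2
     = (1863/8 + 483/4*s) + (2529/8 + 831/4*s) * m + (72 + 99/2*s) * m^2"
    unfolding Xv_def Yv_def m_def
    by (simp add: algebra_simps power2_eq_square power3_eq_cube ss s2) (simp add: field_simps)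
  have "(1863/8 + 483/4*s) + (2529/8 + 831/4*s) * m + (72 + 99/2*s) * m^2 \<ge> 0"
    using s0 m0 by (intro add_nonneg_nonneg mult_nonneg_nonneg) auto
  then have "(x+3) * bb s (x+2) * D \<le> ((7*x+13) - (7*x+15) / bb s (x+1) + (x+1) / (bb s (x+1) * bb s (x+1))) * D"
    using L R G by linarith
  then show ?thesis using Dp by simp
qed

lemma keyU:
  fixes s x :: real
  assumes s2: "s * s = 2" and s0: "s > 0" and x4: "x \<ge> 4"
  shows "(7*x+13) - (7*x+15) / bb s (x+2) + (x+1) / (bb s (x+2) * bb s x) \<le> (x+3) * bb s (x+3)"
proof -
  define Xv where "Xv = (3 + 2*s) * (x+2) - (9/2 + 3*s)"
  define Yv where "Yv = (3 + 2*s) * x - (9/2 + 3*s)"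
  define Zv where "Zv = (3 + 2*s) * (x+3) - (9/2 + 3*s)"
  define m where "m = x - 4"
  have ss: "s * (s * y) = 2 * y" for y using s2 by (metis mult.assoc mult.commute)
  have m0: "m \<ge> 0" using x4 m_def by simp
  have "(3 + 2*s) * x \<ge> (3 + 2*s) * 4" using x4 s0 by (intro mult_left_mono) auto
  then have Yp: "Yv > 0" unfolding Yv_def using s0 by (simp add: algebra_simps)
  have "(3 + 2*s) * (x+2) \<ge> (3 + 2*s) * 4" using x4 s0 by (intro mult_left_mono) auto
  then have Xp: "Xv > 0" unfolding Xv_def using s0 by (simp add: algebra_simps)
  have e1: "bb s (x+2) = Xv / (x+2)" unfolding bb_def Xv_def using x4 by (simp add: field_simps)
  have e0: "bb s x = Yv / x" unfolding bb_def Yv_def using x4 by (simp add: field_simps)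
  have e3: "bb s (x+3) = Zv / (x+3)" unfolding bb_def Zv_def using x4 by (simp add: field_simps)
  define D where "D = Xv * Yv"
  have Dp: "D > 0" unfolding D_def using Xp Yp by simp
  have L: "(x+3) * bb s (x+3) * D = Zv * Xv * Yv" unfolding e3 D_def using x4 by simp
  have R: "((7*x+13) - (7*x+15) / bb s (x+2) + (x+1) / (bb s (x+2) * bb s x)) * D
     = (7*x+13)*Xv*Yv - (7*x+15)*(x+2)*Yv + (x+1)*(x+2)*x"
    unfolding e1 e0 D_def using x4 Xp Yp by (simp add: field_simps)
  have G: "Zv * Xv * Yv - ((7*x+13)*Xv*Yv - (7*x+15)*(x+2)*Yv + (x+1)*(x+2)*x)
     = (795/8 + 345/4*s) + (45 + 69/2*s) * m"
    unfolding Xv_def Yv_def Zv_def m_def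
    by (simp add: algebra_simps power2_eq_square power3_eq_cube ss s2) (simp add: field_simps)
  have "(795/8 + 345/4*s) + (45 + 69/2*s) * m \<ge> 0"
    using s0 m0 by (intro add_nonneg_nonneg mult_nonneg_nonneg) auto
  then have "((7*x+13) - (7*x+15) / bb s (x+2) + (x+1) / (bb s (x+2) * bb s x)) * D \<le> (x+3) * bb s (x+3) * D"
    using L R G by linarith
  then show ?thesis using Dp by simp
qed

lemma F_lo:
  fixes u y B a c d :: real
  assumes "u > B" "B > 0" "1 < y" "y < B" "c > 0" "d \<ge> c"
  shows "a - d/B + c/(B*B) < a - d/u + c/(u*y)"
proof -
  have y0: "y > 0" using assms by simp
  have u0: "u > 0" using assms by simp
  have e1: "d/u - c/(u*y) = (d - c/y)/u" using u0 y0 by (simp add: field_simps)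
  have e2: "d/B - c/(B*B) = (d - c/B)/B" using assms by (simp add: field_simps)
  have k1: "c/B < c/y" using assms y0 by (intro divide_strict_left_mono) auto
  have k2: "c/y < c" using assms y0 by (simp add: divide_less_eq)
  have kp: "d - c/B > 0" using k1 k2 assms by linarith
  have "(d - c/y)/u < (d - c/B)/u" using k1 u0 by (intro divide_strict_right_mono) auto
  also have "\<dots> < (d - c/B)/B" using kp assms by (intro divide_strict_left_mono) auto
  finally have "(d - c/y)/u < (d - c/B)/B" .
  then show ?thesis using e1 e2 by linarith
qed

lemma F_hi:
  fixes u y B0 B2 a c d :: real
  assumes "u < B2" "u > 0" "1 < B0" "B0 < y" "c > 0" "d \<ge> c"
  shows "a - d/u + c/(u*y) < a - d/B2 + c/(B2*B0)"
proof -
  have y0: "y > 0" using assms by simp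
  have B2: "B2 > 0" using assms by simp
  have B0: "B0 > 0" using assms by simp
  have e1: "d/u - c/(u*y) = (d - c/y)/u" using assms y0 by (simp add: field_simps)
  have e2: "d/B2 - c/(B2*B0) = (d - c/B0)/B2" using B2 B0 by (simp add: field_simps)
  have k1: "c/y < c/B0" using assms B0 by (intro divide_strict_left_mono) auto
  have k2: "c/B0 < c" using assms by (simp add: divide_less_eq)
  have kp: "d - c/B0 > 0" using k2 assms by linarith
  have "(d - c/B0)/B2 < (d - c/y)/B2" using k1 B2 by (intro divide_strict_right_mono) auto
  also have "\<dots> < (d - c/y)/u" using kp k1 assms by (intro divide_strict_left_mono) auto
  finally have "(d - c/B0)/B2 < (d - c/y)/u" .
  then show ?thesis using e1 e2 by linarith
qed

lemma bb_ge: assumes "x \<ge> 4" "s > 0" shows "bb s x \<ge> 15/8 + 5/4*s"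
proof -
  have "(9/2 + 3*s)/x \<le> (9/2 + 3*s)/4" using assms by (intro divide_left_mono) auto
  moreover have "(9/2 + 3*s)/4 = 9/8 + 3/4*s" by (simp add: field_simps)
  ultimately show ?thesis unfolding bb_def by linarith
qed

theorem lemma3p1:
  fixes n :: nat
  assumes "n \<ge> 3"
  shows "b n < r n \<and> r n < b (n + 1)"
proof -
  define s where "s = sqrt 2"
  have s2: "s * s = 2" unfolding s_def by simp
  have s0: "s > 0" unfolding s_def by simp
  have slo: "1.414 < s" unfolding s_def by (rule real_less_rsqrt) (simp add: power2_eq_square)
  have shi: "s < 1.415" unfolding s_def by (rule real_less_lsqrt) (simp_all add: power2_eq_square)
  have ss: "s * (s * y) = 2 * y" for y using s2 by (metis mult.assoc mult.commute)
  have beq: "3 * (41 * s + 58) = (9/2 + 3*s) * (14 * s + 20)"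
    by (simp add: algebra_simps ss s2)
  have bn: "b m = bb s (real m)" for m
  proof -
    have p: "14 * s + 20 \<noteq> 0" using s0 by simp
    have "3 * (41 * s + 58) / ((14 * s + 20) * real m) = (9/2 + 3*s) / real m"
      unfolding beq using p by simp
    then show ?thesis unfolding b_def bb_def s_def by simp
  qed
  have rec: "(real m + 3) * R (m+3) = (7 * real m + 13) * R (m+2) - (7 * real m + 15) * R (m+1) + (real m + 1) * R m" for m
    using R_rec[of m] by linarith
  have R0: "R 0 = -1" unfolding R_def by simp
  have R1: "R 1 = 1" unfolding R_def by simp
  have R2: "R 2 = 7" unfolding R_def by (simp add: numeral_2_eq_2)
  have R3: "R 3 = 25" using rec[of 0] R0 R1 R2 by (simp add: eval_nat_numeral)
  have R4: "R 4 = 87" using rec[of 1] R1 R2 R3 by (simp add: eval_nat_numeral)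
  have R5: "R 5 = 329" using rec[of 2] R2 R3 R4 by (simp add: eval_nat_numeral)
  have R6: "R 6 = 1359" using rec[of 3] R3 R4 R5 by (simp add: eval_nat_numeral)
  define P where "P m \<longleftrightarrow> R m > 0 \<and> R (m+1) > 0 \<and> b m < r m \<and> r m < b (m+1) \<and> b (m+1) < r (m+1) \<and> r (m+1) < b (m+2)" for m
  have P4: "P 4"
  proof -
    have "r 4 = 329/87" unfolding r_def using R4 R5 by simp
    moreover have "r 5 = 1359/329" unfolding r_def using R5 R6 by simp
    moreover have "b 4 = 15/8 + 5/4*s" "b 5 = 21/10 + 7/5*s" "b 6 = 9/4 + 3/2*s"
      unfolding bn bb_def by (simp_all add: field_simps)
    ultimately show ?thesis unfolding P_def using R4 R5 slo shi by simp
  qed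
  have step: "P (m+1)" if m4: "m \<ge> 4" and Pm: "P m" for m
  proof -
    define x where "x = real m"
    have x4: "x \<ge> 4" using m4 x_def by simp
    have RA: "R m > 0" and RB: "R (m+1) > 0" and l0: "b m < r m" and u0: "r m < b (m+1)"
      and l1: "b (m+1) < r (m+1)" and u1: "r (m+1) < b (m+2)" using Pm unfolding P_def by auto
    have bm: "b m = bb s x" and bm1: "b (m+1) = bb s (x+1)" and bm2: "b (m+2) = bb s (x+2)"
      and bm3: "b (m+3) = bb s (x+3)" unfolding bn x_def by (simp_all add: add.commute)
    have g0: "b m > 1" unfolding bm using bb_ge[OF x4 s0] s0 by linarith
    have g1: "b (m+1) > 1" unfolding bm1 using bb_ge[of "x+1" s] x4 s0 by linarith
    have rB: "r (m+1) > 0" using l1 g1 by linarith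
    have RC: "R (m+2) > 0"
    proof -
      have "R (m+2) = r (m+1) * R (m+1)" unfolding r_def using RB by (simp add: eval_nat_numeral)
      then show ?thesis using rB RB by simp
    qed
    have Fid: "(x + 3) * r (m+2) = (7*x+13) - (7*x+15) / r (m+1) + (x+1) / (r (m+1) * r m)"
    proof -
      have e: "(x + 3) * R (m+3) = (7 * x + 13) * R (m+2) - (7 * x + 15) * R (m+1) + (x + 1) * R m"
        using rec[of m] unfolding x_def .
      have "(7*x+13) - (7*x+15) / r (m+1) + (x+1) / (r (m+1) * r m)
          = ((7 * x + 13) * R (m+2) - (7 * x + 15) * R (m+1) + (x + 1) * R m) / R (m+2)"
        unfolding r_def using RA RB RC by (simp add: field_simps eval_nat_numeral)
      also have "\<dots> = (x + 3) * r (m+2)" unfolding e[symmetric] r_def by (simp add: eval_nat_numeral)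
      finally show ?thesis by simp
    qed
    have lo: "(7*x+13) - (7*x+15) / b (m+1) + (x+1) / (b (m+1) * b (m+1)) < (x + 3) * r (m+2)"
      unfolding Fid using F_lo[of "b (m+1)" "r (m+1)" "r m" "x+1" "7*x+15" "7*x+13"] l1 g1 l0 u0 g0 x4
      by linarith
    have hi: "(x + 3) * r (m+2) < (7*x+13) - (7*x+15) / b (m+2) + (x+1) / (b (m+2) * b m)"
      unfolding Fid using F_hi[of "r (m+1)" "b (m+2)" "b m" "r m" "x+1" "7*x+15" "7*x+13"] u1 rB g0 l0 x4
      by linarith
    have kl: "(x+3) * b (m+2) \<le> (7*x+13) - (7*x+15) / b (m+1) + (x+1) / (b (m+1) * b (m+1))"
      unfolding bm1 bm2 using keyL[OF s2 s0 x4] .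
    have ku: "(7*x+13) - (7*x+15) / b (m+2) + (x+1) / (b (m+2) * b m) \<le> (x+3) * b (m+3)"
      unfolding bm bm2 bm3 using keyU[OF s2 s0 x4] .
    have x3: "x + 3 > 0" using x4 by simp
    have "(x+3) * b (m+2) < (x+3) * r (m+2)" using lo kl by linarith
    then have n1: "b (m+2) < r (m+2)" using x3 by (simp add: mult_less_cancel_left_pos)
    have "(x+3) * r (m+2) < (x+3) * b (m+3)" using hi ku by linarith
    then have n2: "r (m+2) < b (m+3)" using x3 by (simp add: mult_less_cancel_left_pos)
    have e: "m + 1 + 1 = m + 2" "m + 1 + 2 = m + 3" by simp_all
    show ?thesis unfolding P_def e using RB RC l1 u1 n1 n2 by blast
  qed
  have allP: "P m" if "m \<ge> 4" for m
    using that
  proof (induction m rule: nat_induct_at_least)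
    case base then show ?case by (rule P4)
  next
    case (Suc m) then show ?case using step[of m] by simp
  qed
  show ?thesis
  proof (cases "n = 3")
    case True
    have "r 3 = 87/25" unfolding r_def using R3 R4 by simp
    moreover have "b 3 = 3/2 + s" "b 4 = 15/8 + 5/4*s" unfolding bn bb_def by (simp_all add: field_simps)
    ultimately show ?thesis using True slo shi by simp
  next
    case False
    then have "n \<ge> 4" using assms by simp
    then show ?thesis using allP[of n] unfolding P_def by simp
  qed
qed

end
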